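(* Let $R$ be a D-regularly nil clean ring and let $e\in R$ be an idempotent. Then the corner ring $eRe$ (with identity $e$) is D-regularly nil clean. In particular, if for some positive integer $n$ the matrix ring $\mathbb{M}_n(R)$ is D-regularly nil clean, then $R$ is D-regularly nil clean.
   Context: All rings are associative with identity $1\neq 0$. $Id(R)$ denotes the set of idempotents, $Nil(R)$ the set of nilpotent elements. A ring $R$ is called D-regularly nil clean if for each $a\in R$ there exists an idempotent $e\in aRa\cap Id(R)$ such that $a(1-e)\in Nil(R)$. *)

theory Defs
  imports "HOL-Algebra.Ring"
begin

definition idems :: "('a, 'm) ring_scheme \<Rightarrow> 'a set" where
  "idems R = {e \<in> carrier R. e \<otimes>\<^bsub>R\<^esub> e = e}"

definition nilps :: "('a, 'm) ring_scheme \<Rightarrow> 'a set" where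
  "nilps R = {x \<in> carrier R. \<exists>k::nat. x [^]\<^bsub>R\<^esub> k = \<zero>\<^bsub>R\<^esub>}"

definition two_sided :: "('a, 'm) ring_scheme \<Rightarrow> 'a \<Rightarrow> 'a set" where
  "two_sided R a = {a \<otimes>\<^bsub>R\<^esub> x \<otimes>\<^bsub>R\<^esub> a | x. x \<in> carrier R}"

definition D_regularly_nil_clean :: "('a, 'm) ring_scheme \<Rightarrow> bool" where
  "D_regularly_nil_clean R \<longleftrightarrow> ring R \<and>
     (\<forall>a \<in> carrier R. \<exists>e \<in> two_sided R a \<inter> idems R.
        a \<otimes>\<^bsub>R\<^esub> (\<one>\<^bsub>R\<^esub> \<ominus>\<^bsub>R\<^esub> e) \<in> nilps R)"

definition corner :: "('a, 'm) ring_scheme \<Rightarrow> 'a \<Rightarrow> 'a ring" where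
  "corner R e = \<lparr> carrier = two_sided R e, mult = mult R, one = e,
                  zero = zero R, add = add R \<rparr>"

text \<open>The n x n matrix ring over R: matrices are functions on index pairs,
  with entries in carrier R for indices < n and \<zero> elsewhere.\<close>
definition mat_ring :: "('a, 'm) ring_scheme \<Rightarrow> nat \<Rightarrow> (nat \<times> nat \<Rightarrow> 'a) ring" where
  "mat_ring R n = \<lparr>
     carrier = {A. (\<forall>i j. i < n \<and> j < n \<longrightarrow> A (i, j) \<in> carrier R) \<and>
                   (\<forall>i j. \<not> (i < n \<and> j < n) \<longrightarrow> A (i, j) = \<zero>\<^bsub>R\<^esub>)},
     mult = (\<lambda>A B (i, j). if i < n \<and> j < n
                then (\<Oplus>\<^bsub>R\<^esub>k\<in>{..<n}. A (i, k) \<otimes>\<^bsub>R\<^esub> B (k, j)) else \<zero>\<^bsub>R\<^esub>),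
     one = (\<lambda>(i, j). if i < n \<and> j < n \<and> i = j then \<one>\<^bsub>R\<^esub> else \<zero>\<^bsub>R\<^esub>),
     zero = (\<lambda>_. \<zero>\<^bsub>R\<^esub>),
     add = (\<lambda>A B (i, j). if i < n \<and> j < n then A (i, j) \<oplus>\<^bsub>R\<^esub> B (i, j) else \<zero>\<^bsub>R\<^esub>) \<rparr>"

end

theory Submission
  imports Defs
begin

lemma corner_mem:
  fixes R (structure)
  assumes R: "ring R" and e: "e \<in> idems R"
  shows "x \<in> two_sided R e \<longleftrightarrow> x \<in> carrier R \<and> e \<otimes>\<^bsub>R\<^esub> x = x \<and> x \<otimes>\<^bsub>R\<^esub> e = x"
proof -
  interpret ring R by fact
  have ec: "e \<in> carrier R" and ee: "e \<otimes> e = e" using e by (auto simp: idems_def)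
  show ?thesis
  proof
    assume "x \<in> two_sided R e"
    then obtain y where y: "y \<in> carrier R" "x = e \<otimes> y \<otimes> e" by (auto simp: two_sided_def)
    then show "x \<in> carrier R \<and> e \<otimes> x = x \<and> x \<otimes> e = x"
      using ec ee by (auto simp: m_assoc simp flip: m_assoc[of e e] )
  next
    assume "x \<in> carrier R \<and> e \<otimes> x = x \<and> x \<otimes> e = x"
    then have "x = e \<otimes> x \<otimes> e" "x \<in> carrier R" by auto
    then show "x \<in> two_sided R e" by (auto simp: two_sided_def)
  qed
qed

lemma corner_ring:
  fixes R (structure)
  assumes R: "ring R" and e: "e \<in> idems R"
  shows "ring (corner R e)"
proof -
  interpret ring R by fact
  have ec: "e \<in> carrier R" and ee: "e \<otimes> e = e" using e by (auto simp: idems_def)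
  note cm = corner_mem[OF R e]
  have car: "carrier (corner R e) = two_sided R e" by (simp add: corner_def)
  show ?thesis
  proof (rule ringI)
    show "abelian_group (corner R e)"
    proof (rule abelian_groupI, unfold car cm)
      fix x y assume "x \<in> carrier R \<and> e \<otimes> x = x \<and> x \<otimes> e = x" "y \<in> carrier R \<and> e \<otimes> y = y \<and> y \<otimes> e = y"
      then show "x \<oplus>\<^bsub>corner R e\<^esub> y \<in> carrier R \<and> e \<otimes> (x \<oplus>\<^bsub>corner R e\<^esub> y) = x \<oplus>\<^bsub>corner R e\<^esub> y \<and> (x \<oplus>\<^bsub>corner R e\<^esub> y) \<otimes> e = x \<oplus>\<^bsub>corner R e\<^esub> y"
        using ec by (simp add: corner_def r_distr l_distr)
    next
      show "\<zero>\<^bsub>corner R e\<^esub> \<in> carrier R \<and> e \<otimes> \<zero>\<^bsub>corner R e\<^esub> = \<zero>\<^bsub>corner R e\<^esub> \<and> \<zero>\<^bsub>corner R e\<^esub> \<otimes> e = \<zero>\<^bsub>corner R e\<^esub>"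
        using ec by (simp add: corner_def)
    next
      fix x y z assume "x \<in> carrier R \<and> e \<otimes> x = x \<and> x \<otimes> e = x" "y \<in> carrier R \<and> e \<otimes> y = y \<and> y \<otimes> e = y" "z \<in> carrier R \<and> e \<otimes> z = z \<and> z \<otimes> e = z"
      then show "x \<oplus>\<^bsub>corner R e\<^esub> y \<oplus>\<^bsub>corner R e\<^esub> z = x \<oplus>\<^bsub>corner R e\<^esub> (y \<oplus>\<^bsub>corner R e\<^esub> z)"
        by (simp add: corner_def a_assoc)
    next
      fix x y assume "x \<in> carrier R \<and> e \<otimes> x = x \<and> x \<otimes> e = x" "y \<in> carrier R \<and> e \<otimes> y = y \<and> y \<otimes> e = y"
      then show "x \<oplus>\<^bsub>corner R e\<^esub> y = y \<oplus>\<^bsub>corner R e\<^esub> x"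
        by (simp add: corner_def a_comm)
    next
      fix x assume "x \<in> carrier R \<and> e \<otimes> x = x \<and> x \<otimes> e = x"
      then show "\<zero>\<^bsub>corner R e\<^esub> \<oplus>\<^bsub>corner R e\<^esub> x = x" by (simp add: corner_def)
    next
      fix x assume x: "x \<in> carrier R \<and> e \<otimes> x = x \<and> x \<otimes> e = x"
      show "\<exists>y\<in>two_sided R e. y \<oplus>\<^bsub>corner R e\<^esub> x = \<zero>\<^bsub>corner R e\<^esub>"
        using x ec by (intro bexI[of _ "\<ominus> x"]) (auto simp: cm corner_def l_minus r_minus l_neg)
    qed
  next
    show "monoid (corner R e)"
    proof (rule monoidI, unfold car cm)
      fix x y assume "x \<in> carrier R \<and> e \<otimes> x = x \<and> x \<otimes> e = x" "y \<in> carrier R \<and> e \<otimes> y = y \<and> y \<otimes> e = y"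
      then show "x \<otimes>\<^bsub>corner R e\<^esub> y \<in> carrier R \<and> e \<otimes> (x \<otimes>\<^bsub>corner R e\<^esub> y) = x \<otimes>\<^bsub>corner R e\<^esub> y \<and> (x \<otimes>\<^bsub>corner R e\<^esub> y) \<otimes> e = x \<otimes>\<^bsub>corner R e\<^esub> y"
        using ec by (simp add: corner_def m_assoc flip: m_assoc[of e x y])
    next
      show "\<one>\<^bsub>corner R e\<^esub> \<in> carrier R \<and> e \<otimes> \<one>\<^bsub>corner R e\<^esub> = \<one>\<^bsub>corner R e\<^esub> \<and> \<one>\<^bsub>corner R e\<^esub> \<otimes> e = \<one>\<^bsub>corner R e\<^esub>"
        using ec ee by (simp add: corner_def)
    next
      fix x y z assume "x \<in> carrier R \<and> e \<otimes> x = x \<and> x \<otimes> e = x" "y \<in> carrier R \<and> e \<otimes> y = y \<and> y \<otimes> e = y" "z \<in> carrier R \<and> e \<otimes> z = z \<and> z \<otimes> e = z"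
      then show "x \<otimes>\<^bsub>corner R e\<^esub> y \<otimes>\<^bsub>corner R e\<^esub> z = x \<otimes>\<^bsub>corner R e\<^esub> (y \<otimes>\<^bsub>corner R e\<^esub> z)"
        by (simp add: corner_def m_assoc)
    next
      fix x assume "x \<in> carrier R \<and> e \<otimes> x = x \<and> x \<otimes> e = x"
      then show "\<one>\<^bsub>corner R e\<^esub> \<otimes>\<^bsub>corner R e\<^esub> x = x" by (simp add: corner_def)
    next
      fix x assume "x \<in> carrier R \<and> e \<otimes> x = x \<and> x \<otimes> e = x"
      then show "x \<otimes>\<^bsub>corner R e\<^esub> \<one>\<^bsub>corner R e\<^esub> = x" by (simp add: corner_def)
    qed
  next
    fix x y z assume "x \<in> carrier (corner R e)" "y \<in> carrier (corner R e)" "z \<in> carrier (corner R e)"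
    then show "(x \<oplus>\<^bsub>corner R e\<^esub> y) \<otimes>\<^bsub>corner R e\<^esub> z = x \<otimes>\<^bsub>corner R e\<^esub> z \<oplus>\<^bsub>corner R e\<^esub> y \<otimes>\<^bsub>corner R e\<^esub> z"
      by (simp add: car cm corner_def l_distr)
  next
    fix x y z assume "x \<in> carrier (corner R e)" "y \<in> carrier (corner R e)" "z \<in> carrier (corner R e)"
    then show "z \<otimes>\<^bsub>corner R e\<^esub> (x \<oplus>\<^bsub>corner R e\<^esub> y) = z \<otimes>\<^bsub>corner R e\<^esub> x \<oplus>\<^bsub>corner R e\<^esub> z \<otimes>\<^bsub>corner R e\<^esub> y"
      by (simp add: car cm corner_def r_distr)
  qed
qed


lemma corner_pow:
  fixes R (structure)
  assumes R: "ring R" and e: "e \<in> idems R" and x: "x \<in> two_sided R e"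
  shows "x [^]\<^bsub>corner R e\<^esub> (Suc k) = x [^]\<^bsub>R\<^esub> (Suc k)"
proof (induction k)
  case 0
  interpret ring R by fact
  show ?case using x by (simp add: corner_def corner_mem[OF R e])
next
  case (Suc k)
  then show ?case by (simp add: corner_def)
qed

lemma part1:
  fixes R (structure)
  assumes e: "e \<in> idems R" and D: "D_regularly_nil_clean R"
  shows "D_regularly_nil_clean (corner R e)"
proof -
  have R: "ring R" using D by (simp add: D_regularly_nil_clean_def)
  interpret ring R by fact
  interpret C: ring "corner R e" by (rule corner_ring[OF R e])
  have ec: "e \<in> carrier R" and ee: "e \<otimes> e = e" using e by (auto simp: idems_def)
  note cm = corner_mem[OF R e]
  have car: "carrier (corner R e) = two_sided R e" by (simp add: corner_def)
  show ?thesis unfolding D_regularly_nil_clean_def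
  proof (intro conjI ballI)
    show "ring (corner R e)" by (rule C.ring_axioms)
    fix a assume "a \<in> carrier (corner R e)"
    then have a: "a \<in> carrier R" "e \<otimes> a = a" "a \<otimes> e = a" by (auto simp: car cm)
    from D a(1) obtain f where f: "f \<in> two_sided R a" "f \<in> idems R" "a \<otimes> (\<one> \<ominus> f) \<in> nilps R"
      by (auto simp: D_regularly_nil_clean_def)
    from f(1) obtain x where x: "x \<in> carrier R" "f = a \<otimes> x \<otimes> a" by (auto simp: two_sided_def)
    have fc: "f \<in> carrier R" "f \<otimes> f = f" using f(2) by (auto simp: idems_def)
    have ef: "e \<otimes> f = f" "f \<otimes> e = f" using x a ec
      by (simp_all add: m_assoc flip: m_assoc[of e a])
    have fC: "f \<in> two_sided R e" using fc ef by (simp add: cm)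
    have exe: "e \<otimes> x \<otimes> e \<in> two_sided R e" using x ec by (auto simp: two_sided_def)
    have "f = a \<otimes> (e \<otimes> x \<otimes> e) \<otimes> a" using x a ec
      by (simp add: m_assoc) (simp flip: m_assoc[of a e] add: a)
    then have f1: "f \<in> two_sided (corner R e) a" using exe
      by (auto simp: two_sided_def corner_def)
    have f2: "f \<in> idems (corner R e)" using fC fc by (simp add: idems_def corner_def)
    have inv: "\<ominus>\<^bsub>corner R e\<^esub> f = \<ominus> f"
    proof (rule C.minus_equality)
      show "f \<in> carrier (corner R e)" using fC by (simp add: car)
      show "\<ominus> f \<in> carrier (corner R e)" using fc ec ef by (simp add: car cm l_minus r_minus)
      show "\<ominus> f \<oplus>\<^bsub>corner R e\<^esub> f = \<zero>\<^bsub>corner R e\<^esub>" using fc by (simp add: corner_def l_neg)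
    qed
    have eq: "a \<otimes>\<^bsub>corner R e\<^esub> (\<one>\<^bsub>corner R e\<^esub> \<ominus>\<^bsub>corner R e\<^esub> f) = a \<otimes> (\<one> \<ominus> f)"
      using a fc ec unfolding a_minus_def inv
      by (simp add: corner_def r_distr r_minus)
    obtain k :: nat where k: "(a \<otimes> (\<one> \<ominus> f)) [^] k = \<zero>" using f(3) by (auto simp: nilps_def)
    have gC: "a \<otimes> (\<one> \<ominus> f) \<in> carrier (corner R e)"
    proof -
      have "f \<in> carrier (corner R e)" using fC by (simp add: car)
      then have "\<one>\<^bsub>corner R e\<^esub> \<ominus>\<^bsub>corner R e\<^esub> f \<in> carrier (corner R e)" by simp
      then show ?thesis using C.m_closed \<open>a \<in> carrier (corner R e)\<close> eq by metis
    qed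
    have P: "(a \<otimes> (\<one> \<ominus> f)) [^]\<^bsub>corner R e\<^esub> (Suc k) = \<zero>"
      using corner_pow[OF R e gC[unfolded car]] k gC a fc
      by (simp add: nat_pow_Suc2 del: nat_pow_Suc)
    moreover have "\<zero>\<^bsub>corner R e\<^esub> = \<zero>" by (simp add: corner_def)
    ultimately have "a \<otimes>\<^bsub>corner R e\<^esub> (\<one>\<^bsub>corner R e\<^esub> \<ominus>\<^bsub>corner R e\<^esub> f) \<in> nilps (corner R e)"
      unfolding eq nilps_def using gC \<open>\<zero>\<^bsub>corner R e\<^esub> = \<zero>\<close> P
      by (intro CollectI conjI exI[of _ "Suc k"]) simp_all
    then show "\<exists>f\<in>two_sided (corner R e) a \<inter> idems (corner R e).
          a \<otimes>\<^bsub>corner R e\<^esub> (\<one>\<^bsub>corner R e\<^esub> \<ominus>\<^bsub>corner R e\<^esub> f) \<in> nilps (corner R e)"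
      using f1 f2 by blast
  qed
qed


definition sing :: "('a, 'm) ring_scheme \<Rightarrow> 'a \<Rightarrow> (nat \<times> nat \<Rightarrow> 'a)" where
  "sing R g = (\<lambda>(i, j). if i = 0 \<and> j = 0 then g else \<zero>\<^bsub>R\<^esub>)"

lemma mat_simps:
  "carrier (mat_ring R n) = {A. (\<forall>i j. i < n \<and> j < n \<longrightarrow> A (i, j) \<in> carrier R) \<and>
                   (\<forall>i j. \<not> (i < n \<and> j < n) \<longrightarrow> A (i, j) = \<zero>\<^bsub>R\<^esub>)}"
  "(A \<otimes>\<^bsub>mat_ring R n\<^esub> B) (i, j) = (if i < n \<and> j < n
                then (\<Oplus>\<^bsub>R\<^esub>k\<in>{..<n}. A (i, k) \<otimes>\<^bsub>R\<^esub> B (k, j)) else \<zero>\<^bsub>R\<^esub>)"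
  "\<one>\<^bsub>mat_ring R n\<^esub> (i, j) = (if i < n \<and> j < n \<and> i = j then \<one>\<^bsub>R\<^esub> else \<zero>\<^bsub>R\<^esub>)"
  "\<zero>\<^bsub>mat_ring R n\<^esub> = (\<lambda>_. \<zero>\<^bsub>R\<^esub>)"
  "(A \<oplus>\<^bsub>mat_ring R n\<^esub> B) (i, j) = (if i < n \<and> j < n then A (i, j) \<oplus>\<^bsub>R\<^esub> B (i, j) else \<zero>\<^bsub>R\<^esub>)"
  by (simp_all add: mat_ring_def)

lemma sing_carrier:
  fixes R (structure)
  assumes "ring R" "n > 0" "g \<in> carrier R"
  shows "sing R g \<in> carrier (mat_ring R n)"
proof -
  interpret ring R by fact
  show ?thesis using assms by (auto simp: mat_simps sing_def)
qed

lemma sing_mult_left: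
  fixes R (structure)
  assumes R: "ring R" and n: "n > 0" and g: "g \<in> carrier R" and X: "X \<in> carrier (mat_ring R n)"
  shows "sing R g \<otimes>\<^bsub>mat_ring R n\<^esub> X = (\<lambda>(i, j). if i = 0 \<and> j < n then g \<otimes> X (0, j) else \<zero>)"
proof (rule ext, clarify)
  interpret ring R by fact
  fix i j
  have Xc: "\<And>k l. k < n \<Longrightarrow> l < n \<Longrightarrow> X (k, l) \<in> carrier R" using X by (simp add: mat_simps)
  show "(sing R g \<otimes>\<^bsub>mat_ring R n\<^esub> X) (i, j) = (if i = 0 \<and> j < n then g \<otimes> X (0, j) else \<zero>)"
  proof (cases "i < n \<and> j < n")
    case True
    show ?thesis
    proof (cases "i = 0")
      case True
      have "(\<Oplus>k\<in>{..<n}. sing R g (i, k) \<otimes> X (k, j)) = (\<Oplus>k\<in>{..<n}. if 0 = k then g \<otimes> X (k, j) else \<zero>)"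
        using True \<open>i < n \<and> j < n\<close> g Xc by (intro finsum_cong) (auto simp: sing_def Pi_def simp_implies_def)
      also have "\<dots> = g \<otimes> X (0, j)" using n g Xc \<open>i < n \<and> j < n\<close>
        by (intro finsum_singleton) (auto simp: Pi_def)
      finally show ?thesis using True \<open>i < n \<and> j < n\<close> by (simp add: mat_simps)
    next
      case False
      have "(\<Oplus>k\<in>{..<n}. sing R g (i, k) \<otimes> X (k, j)) = (\<Oplus>k\<in>{..<n}. \<zero>)"
        using False \<open>i < n \<and> j < n\<close> g Xc by (intro finsum_cong) (auto simp: sing_def Pi_def simp_implies_def)
      also have "\<dots> = \<zero>" by (rule finsum_zero)
      finally show ?thesis using False \<open>i < n \<and> j < n\<close> by (simp add: mat_simps)
    qed
  next
    case False
    then show ?thesis using n by (auto simp: mat_simps)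
  qed
qed

lemma sing_mult_right:
  fixes R (structure)
  assumes R: "ring R" and n: "n > 0" and g: "g \<in> carrier R" and X: "X \<in> carrier (mat_ring R n)"
  shows "X \<otimes>\<^bsub>mat_ring R n\<^esub> sing R g = (\<lambda>(i, j). if i < n \<and> j = 0 then X (i, 0) \<otimes> g else \<zero>)"
proof (rule ext, clarify)
  interpret ring R by fact
  fix i j
  have Xc: "\<And>k l. k < n \<Longrightarrow> l < n \<Longrightarrow> X (k, l) \<in> carrier R" using X by (simp add: mat_simps)
  show "(X \<otimes>\<^bsub>mat_ring R n\<^esub> sing R g) (i, j) = (if i < n \<and> j = 0 then X (i, 0) \<otimes> g else \<zero>)"
  proof (cases "i < n \<and> j < n")
    case True
    show ?thesis
    proof (cases "j = 0")
      case True
      have "(\<Oplus>k\<in>{..<n}. X (i, k) \<otimes> sing R g (k, j)) = (\<Oplus>k\<in>{..<n}. if 0 = k then X (i, k) \<otimes> g else \<zero>)"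
        using True \<open>i < n \<and> j < n\<close> g Xc by (intro finsum_cong) (auto simp: sing_def Pi_def simp_implies_def)
      also have "\<dots> = X (i, 0) \<otimes> g" using n g Xc \<open>i < n \<and> j < n\<close>
        by (intro finsum_singleton) (auto simp: Pi_def)
      finally show ?thesis using True \<open>i < n \<and> j < n\<close> by (simp add: mat_simps)
    next
      case False
      have "(\<Oplus>k\<in>{..<n}. X (i, k) \<otimes> sing R g (k, j)) = (\<Oplus>k\<in>{..<n}. \<zero>)"
        using False \<open>i < n \<and> j < n\<close> g Xc by (intro finsum_cong) (auto simp: sing_def Pi_def simp_implies_def)
      also have "\<dots> = \<zero>" by (rule finsum_zero)
      finally show ?thesis using False \<open>i < n \<and> j < n\<close> by (simp add: mat_simps)
    qed
  next
    case False
    then show ?thesis using n by (auto simp: mat_simps)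
  qed
qed


lemma sing_eqI:
  fixes R (structure)
  shows "B (0, 0) = g \<Longrightarrow> (\<And>i j. \<not> (i = 0 \<and> j = 0) \<Longrightarrow> B (i, j) = \<zero>) \<Longrightarrow> B = sing R g"
proof (rule ext)
  fix p :: "nat \<times> nat"
  assume h1: "B (0, 0) = g" and h2: "\<And>i j. \<not> (i = 0 \<and> j = 0) \<Longrightarrow> B (i, j) = \<zero>"
  obtain i j where p: "p = (i, j)" by (cases p)
  show "B p = sing R g p"
  proof (cases "i = 0 \<and> j = 0")
    case True then show ?thesis using h1 p by (simp add: sing_def)
  next
    case False
    have "sing R g p = \<zero>" using False p unfolding sing_def by auto
    then show ?thesis using h2[OF False] p by simp
  qed
qed

lemma sing_pow:
  fixes R (structure)
  assumes R: "ring R" and n: "n > 0" and M: "ring (mat_ring R n)" and g: "g \<in> carrier R"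
  shows "sing R g [^]\<^bsub>mat_ring R n\<^esub> (Suc k) = sing R (g [^] Suc k)"
proof (induction k)
  case 0
  interpret ring R by fact
  interpret M: ring "mat_ring R n" by fact
  show ?case using sing_carrier[OF R n g] g by simp
next
  case (Suc k)
  interpret ring R by fact
  interpret M: ring "mat_ring R n" by fact
  have gk: "g [^] Suc k \<in> carrier R" using g by blast
  have "sing R g [^]\<^bsub>mat_ring R n\<^esub> Suc (Suc k) = sing R (g [^] Suc k) \<otimes>\<^bsub>mat_ring R n\<^esub> sing R g"
    using Suc by simp
  also have "\<dots> = sing R (g [^] Suc (Suc k))"
    unfolding sing_mult_left[OF R n gk sing_carrier[OF R n g]]
    using g gk n by (intro sing_eqI) (auto simp: sing_def)
  finally show ?case .
qed

lemma part2:
  fixes R (structure)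
  assumes R: "ring R" and n: "n > 0" and D: "D_regularly_nil_clean (mat_ring R n)"
  shows "D_regularly_nil_clean R"
proof -
  interpret ring R by fact
  have M: "ring (mat_ring R n)" using D by (simp add: D_regularly_nil_clean_def)
  interpret M: ring "mat_ring R n" by fact
  show ?thesis unfolding D_regularly_nil_clean_def
  proof (intro conjI ballI)
    show "ring R" by fact
    fix a assume a: "a \<in> carrier R"
    define A where "A = sing R a"
    have Ac: "A \<in> carrier (mat_ring R n)" unfolding A_def by (rule sing_carrier[OF R n a])
    from D Ac obtain F where F: "F \<in> two_sided (mat_ring R n) A" "F \<in> idems (mat_ring R n)"
      "A \<otimes>\<^bsub>mat_ring R n\<^esub> (\<one>\<^bsub>mat_ring R n\<^esub> \<ominus>\<^bsub>mat_ring R n\<^esub> F) \<in> nilps (mat_ring R n)"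
      by (auto simp: D_regularly_nil_clean_def)
    from F(1) obtain X where X: "X \<in> carrier (mat_ring R n)" "F = A \<otimes>\<^bsub>mat_ring R n\<^esub> X \<otimes>\<^bsub>mat_ring R n\<^esub> A"
      by (auto simp: two_sided_def)
    have Xc: "\<And>k l. k < n \<Longrightarrow> l < n \<Longrightarrow> X (k, l) \<in> carrier R" using X by (simp add: mat_simps)
    define f where "f = a \<otimes> X (0, 0) \<otimes> a"
    have fc: "f \<in> carrier R" unfolding f_def using a Xc n by simp
    define Y where "Y = A \<otimes>\<^bsub>mat_ring R n\<^esub> X"
    have Yc: "Y \<in> carrier (mat_ring R n)" unfolding Y_def using Ac X by simp
    have Y: "Y = (\<lambda>(i, j). if i = 0 \<and> j < n then a \<otimes> X (0, j) else \<zero>)"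
      unfolding Y_def A_def by (rule sing_mult_left[OF R n a X(1)])
    have FF: "F = sing R f"
      unfolding X(2) Y_def[symmetric] sing_mult_right[OF R n a Yc, folded A_def]
      using n a by (intro sing_eqI) (auto simp: Y f_def)
    have Fc: "F \<in> carrier (mat_ring R n)" using F(2) by (simp add: idems_def)
    have "F \<otimes>\<^bsub>mat_ring R n\<^esub> F = F" using F(2) by (simp add: idems_def)
    then have "(F \<otimes>\<^bsub>mat_ring R n\<^esub> F) (0, 0) = F (0, 0)" by simp
    then have ff: "f \<otimes> f = f"
      using n unfolding sing_mult_left[OF R n fc Fc, folded FF] by (simp add: FF sing_def)
    define H where "H = \<one>\<^bsub>mat_ring R n\<^esub> \<ominus>\<^bsub>mat_ring R n\<^esub> F"
    have Hc: "H \<in> carrier (mat_ring R n)" unfolding H_def using Fc by simp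
    have FH: "F \<oplus>\<^bsub>mat_ring R n\<^esub> H = \<one>\<^bsub>mat_ring R n\<^esub>"
    proof -
      have "F \<oplus>\<^bsub>mat_ring R n\<^esub> (\<one>\<^bsub>mat_ring R n\<^esub> \<oplus>\<^bsub>mat_ring R n\<^esub> \<ominus>\<^bsub>mat_ring R n\<^esub> F)
          = \<one>\<^bsub>mat_ring R n\<^esub> \<oplus>\<^bsub>mat_ring R n\<^esub> (F \<oplus>\<^bsub>mat_ring R n\<^esub> \<ominus>\<^bsub>mat_ring R n\<^esub> F)"
        using Fc by (simp add: M.add.m_lcomm)
      also have "\<dots> = \<one>\<^bsub>mat_ring R n\<^esub>" using Fc by (simp add: M.r_neg)
      finally show ?thesis by (simp add: H_def M.minus_eq)
    qed
    have Hent: "\<And>j. j < n \<Longrightarrow> H (0, j) = \<one>\<^bsub>mat_ring R n\<^esub> (0, j) \<ominus> F (0, j)"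
    proof -
      fix j assume j: "j < n"
      have hc: "H (0, j) \<in> carrier R" "F (0, j) \<in> carrier R" using Hc Fc j n by (auto simp: mat_simps)
      have "(F \<oplus>\<^bsub>mat_ring R n\<^esub> H) (0, j) = \<one>\<^bsub>mat_ring R n\<^esub> (0, j)" using FH by simp
      then have e: "F (0, j) \<oplus> H (0, j) = \<one>\<^bsub>mat_ring R n\<^esub> (0, j)" using j n by (simp add: mat_simps)
      have "H (0, j) = (\<ominus> F (0, j) \<oplus> F (0, j)) \<oplus> H (0, j)" using hc by (simp add: l_neg)
      also have "\<dots> = \<ominus> F (0, j) \<oplus> \<one>\<^bsub>mat_ring R n\<^esub> (0, j)" using hc e by (simp add: a_assoc)
      also have "\<dots> = \<one>\<^bsub>mat_ring R n\<^esub> (0, j) \<ominus> F (0, j)"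
        using hc j n by (simp add: minus_eq a_comm mat_simps)
      finally show "H (0, j) = \<one>\<^bsub>mat_ring R n\<^esub> (0, j) \<ominus> F (0, j)" .
    qed
    define g where "g = a \<otimes> (\<one> \<ominus> f)"
    have gc: "g \<in> carrier R" unfolding g_def using a fc by simp
    have AH: "A \<otimes>\<^bsub>mat_ring R n\<^esub> H = sing R g"
      unfolding A_def sing_mult_left[OF R n a Hc]
    proof (rule sing_eqI)
      show "(case (0, 0) of (i, j) \<Rightarrow> if i = 0 \<and> j < n then a \<otimes> H (0, j) else \<zero>) = g"
        using n Hent[of 0] by (simp add: g_def mat_simps FF sing_def)
      fix i j :: nat assume ij: "\<not> (i = 0 \<and> j = 0)"
      show "(case (i, j) of (i, j) \<Rightarrow> if i = 0 \<and> j < n then a \<otimes> H (0, j) else \<zero>) = \<zero>"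
        using ij Hent[of j] a by (auto simp: mat_simps FF sing_def minus_eq)
    qed
    obtain k :: nat where k: "(sing R g) [^]\<^bsub>mat_ring R n\<^esub> k = \<zero>\<^bsub>mat_ring R n\<^esub>"
      using F(3) AH by (auto simp: nilps_def H_def)
    have "sing R g [^]\<^bsub>mat_ring R n\<^esub> (Suc k) = \<zero>\<^bsub>mat_ring R n\<^esub>"
      using k sing_carrier[OF R n gc] by simp
    then have "sing R (g [^] Suc k) (0, 0) = \<zero>"
      unfolding sing_pow[OF R n M gc] by (simp add: mat_simps)
    then have gk: "g [^] Suc k = \<zero>" by (simp add: sing_def)
    have "f \<in> two_sided R a" unfolding f_def two_sided_def using Xc n by auto
    moreover have "f \<in> idems R" using fc ff by (simp add: idems_def)
    moreover have "g \<in> nilps R" unfolding nilps_def using gc gk by blast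
    ultimately show "\<exists>e\<in>two_sided R a \<inter> idems R. a \<otimes> (\<one> \<ominus> e) \<in> nilps R"
      unfolding g_def by blast
  qed
qed

theorem proposition2p3:
  fixes R :: "('a, 'm) ring_scheme"
  shows "(\<forall>e \<in> idems R. D_regularly_nil_clean R \<longrightarrow> D_regularly_nil_clean (corner R e))
       \<and> (\<forall>n::nat. n > 0 \<longrightarrow> ring R \<longrightarrow> D_regularly_nil_clean (mat_ring R n)
             \<longrightarrow> D_regularly_nil_clean R)"
proof (intro conjI ballI allI impI)
  fix e assume "e \<in> idems R" "D_regularly_nil_clean R"
  then show "D_regularly_nil_clean (corner R e)" by (rule part1)
next
  fix n :: nat assume "n > 0" "ring R" "D_regularly_nil_clean (mat_ring R n)"
  show "D_regularly_nil_clean R"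
    by (rule part2[OF \<open>ring R\<close> \<open>n > 0\<close> \<open>D_regularly_nil_clean (mat_ring R n)\<close>])
qed

end
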